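(* Let $\mathbf{X}\in\mathbb{R}^{m\times n}_+$ be a nonnegative matrix with no zero row and no zero column, and let $\mathbf{x}_1,\dots,\mathbf{x}_m\in\mathbb{R}^n_+$ be the columns of $\mathbf{X}^\top$ (the rows of $\mathbf{X}$). Let $\mathbf{U}^\star=[\mathbf{u}_1,\dots,\mathbf{u}_c]\in\mathbb{R}^{n\times c}$ be the matrix whose columns are generators of the (pairwise distinct) extreme rays of $\operatorname{cone}(\mathbf{X}^\top)$, and let $\boldsymbol{\mu}=\frac{1}{m}\sum_{i=1}^m\mathbf{x}_i$. If $c\ge 2$, then for every $k\in\{1,\dots,c\}$ there is no scalar $\tau$ with $\boldsymbol{\mu}=\tau\,\mathbf{u}_k$; i.e. no extreme ray of $\operatorname{cone}(\mathbf{X}^\top)$ is colinear with the mean $\boldsymbol{\mu}$.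
   Context: $\operatorname{cone}(\mathbf{X}^\top):=\{\mathbf{X}^\top\boldsymbol{\alpha}:\boldsymbol{\alpha}\ge 0\}\subseteq\mathbb{R}^n$. A ray $\mathbb{R}_+\mathbf{u}\subseteq\operatorname{cone}(\mathbf{X}^\top)$ (with $\mathbf{u}\neq 0$) is extreme if whenever $\mathbf{u}=\mathbf{v}+\mathbf{w}$ with $\mathbf{v},\mathbf{w}\in\operatorname{cone}(\mathbf{X}^\top)$, then $\mathbf{v}=a\mathbf{u}$ and $\mathbf{w}=b\mathbf{u}$ for some $a,b\ge 0$. *)

theory Defs
  imports "HOL-Analysis.Analysis"
begin

text \<open>The rows of the m-by-n matrix X are the vectors x i, i < m, in R^n.
  cone(X^T) is the set of nonnegative combinations of these rows.\<close>

definition row_cone :: "nat \<Rightarrow> (nat \<Rightarrow> real^'n) \<Rightarrow> (real^'n) set" where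
  "row_cone m x = {(\<Sum>i<m. a i *\<^sub>R x i) | a. \<forall>i<m. a i \<ge> 0}"

definition extreme_ray :: "(real^'n) set \<Rightarrow> real^'n \<Rightarrow> bool" where
  "extreme_ray K u \<longleftrightarrow> u \<noteq> 0 \<and> {t *\<^sub>R u | t. t \<ge> 0} \<subseteq> K \<and>
     (\<forall>v w. v \<in> K \<and> w \<in> K \<and> u = v + w \<longrightarrow>
        (\<exists>a b. a \<ge> 0 \<and> b \<ge> 0 \<and> v = a *\<^sub>R u \<and> w = b *\<^sub>R u))"

definition same_ray :: "real^'n \<Rightarrow> real^'n \<Rightarrow> bool" where
  "same_ray u v \<longleftrightarrow> (\<exists>t>0. v = t *\<^sub>R u)"

end

theory Submission
  imports Defs
begin

lemma in_row_cone: "\<forall>i<m. a i \<ge> 0 \<Longrightarrow> (\<Sum>i<m. a i *\<^sub>R x i) \<in> row_cone m x"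
  unfolding row_cone_def by blast

lemma row_cone_nonneg:
  assumes "\<forall>i<m. \<forall>j. x i $ j \<ge> (0::real)" "v \<in> row_cone m x"
  shows "v $ j \<ge> 0"
proof -
  obtain a where a: "\<forall>i<m. a i \<ge> 0" "v = (\<Sum>i<m. a i *\<^sub>R x i)"
    using assms(2) unfolding row_cone_def by blast
  have "v $ j = (\<Sum>i<m. a i * x i $ j)" using a(2) by (simp add: sum_component)
  also have "\<dots> \<ge> 0" using a(1) assms(1) by (intro sum_nonneg) simp
  finally show ?thesis .
qed

theorem lemma4p1:
  fixes m c :: nat
    and x :: "nat \<Rightarrow> real^'n"
    and u :: "nat \<Rightarrow> real^'n"
  assumes nonneg: "\<forall>i<m. \<forall>j. x i $ j \<ge> 0"
    and no_zero_row: "\<forall>i<m. x i \<noteq> 0"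
    and no_zero_col: "\<forall>j. \<exists>i<m. x i $ j \<noteq> 0"
    and gens_extreme: "\<forall>k<c. extreme_ray (row_cone m x) (u k)"
    and gens_distinct: "\<forall>k<c. \<forall>l<c. k \<noteq> l \<longrightarrow> \<not> same_ray (u k) (u l)"
    and gens_all: "\<forall>v. extreme_ray (row_cone m x) v \<longrightarrow> (\<exists>k<c. same_ray (u k) v)"
    and c2: "c \<ge> 2"
  shows "\<forall>k<c. \<not> (\<exists>\<tau>::real. (1 / real m) *\<^sub>R (\<Sum>i<m. x i) = \<tau> *\<^sub>R u k)"
proof (intro allI impI notI)
  fix k assume k: "k < c"
  assume "\<exists>\<tau>::real. (1 / real m) *\<^sub>R (\<Sum>i<m. x i) = \<tau> *\<^sub>R u k"
  then obtain \<tau> :: real where tau: "(1 / real m) *\<^sub>R (\<Sum>i<m. x i) = \<tau> *\<^sub>R u k" by blast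
  have ext: "extreme_ray (row_cone m x) (u k)" using gens_extreme k by blast
  have ukK: "u k \<in> row_cone m x"
  proof -
    have "{t *\<^sub>R u k |t. t \<ge> 0} \<subseteq> row_cone m x" using ext unfolding extreme_ray_def by blast
    moreover have "u k \<in> {t *\<^sub>R u k |t. t \<ge> 0}" by (rule CollectI, rule exI[of _ 1]) simp
    ultimately show ?thesis by blast
  qed
  obtain j0 :: 'n where "True" by simp
  obtain i0 where i0: "i0 < m" "x i0 $ j0 \<noteq> 0" using no_zero_col by blast
  have mpos: "m > 0" using i0 by simp
  have "x i0 $ j0 > 0" proof -
    have "x i0 $ j0 \<ge> 0" using i0 nonneg by blast
    then show ?thesis using i0(2) by linarith
  qed
  have "(\<Sum>i<m. x i) $ j0 = (\<Sum>i<m. x i $ j0)" by (simp add: sum_component)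
  also have "\<dots> \<ge> x i0 $ j0"
    using i0 nonneg by (intro member_le_sum) auto
  finally have s: "(\<Sum>i<m. x i) $ j0 > 0" using \<open>x i0 $ j0 > 0\<close> by linarith
  have "\<tau> * u k $ j0 > 0"
  proof -
    have "((1 / real m) *\<^sub>R (\<Sum>i<m. x i)) $ j0 > 0" using s mpos by simp
    then show ?thesis using tau by simp
  qed
  moreover have "u k $ j0 \<ge> 0" using row_cone_nonneg[OF nonneg ukK] .
  ultimately have taupos: "\<tau> > 0"
    by (metis mult_nonpos_nonneg not_le)
  define d where "d = 1 / (real m * \<tau>)"
  have dpos: "d > 0" using taupos mpos by (simp add: d_def)
  have uk: "u k = (\<Sum>i<m. d *\<^sub>R x i)"
  proof -
    have "u k = (1/\<tau>) *\<^sub>R (\<tau> *\<^sub>R u k)" using taupos by simp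
    also have "\<dots> = (1/\<tau>) *\<^sub>R ((1 / real m) *\<^sub>R (\<Sum>i<m. x i))" using tau by simp
    also have "\<dots> = d *\<^sub>R (\<Sum>i<m. x i)" by (simp add: d_def)
    finally show ?thesis by (simp add: scaleR_sum_right)
  qed
  have xi: "\<exists>b\<ge>0. x i = b *\<^sub>R u k" if i: "i < m" for i
  proof -
    define v where "v = (\<Sum>j<m. (if j = i then d else 0) *\<^sub>R x j)"
    define w where "w = (\<Sum>j<m. (if j = i then 0 else d) *\<^sub>R x j)"
    have vK: "v \<in> row_cone m x" unfolding v_def using dpos by (intro in_row_cone) auto
    have wK: "w \<in> row_cone m x" unfolding w_def using dpos by (intro in_row_cone) auto
    have "v + w = (\<Sum>j<m. d *\<^sub>R x j)"
      unfolding v_def w_def sum.distrib[symmetric] scaleR_add_left[symmetric]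
      by (intro sum.cong) auto
    then have "u k = v + w" using uk by simp
    then obtain a where a: "a \<ge> 0" "v = a *\<^sub>R u k"
      using ext vK wK unfolding extreme_ray_def by blast
    have "v = d *\<^sub>R x i" unfolding v_def using i
      by (simp add: if_distrib[of "\<lambda>t. t *\<^sub>R _"] sum.delta cong: if_cong)
    then have "x i = (1/d) *\<^sub>R v" using dpos by simp
    then have "x i = (a / d) *\<^sub>R u k" using a by simp
    then show ?thesis using a dpos by (intro exI[of _ "a/d"]) auto
  qed
  then obtain b where b: "\<forall>i<m. b i \<ge> 0 \<and> x i = b i *\<^sub>R u k" by metis
  define l where "l = (if k = 0 then 1 else 0::nat)"
  have l: "l < c" "l \<noteq> k" using c2 k by (auto simp: l_def)
  have extl: "extreme_ray (row_cone m x) (u l)" using gens_extreme l by blast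
  have ulK: "u l \<in> row_cone m x"
  proof -
    have "{t *\<^sub>R u l |t. t \<ge> 0} \<subseteq> row_cone m x" using extl unfolding extreme_ray_def by blast
    moreover have "u l \<in> {t *\<^sub>R u l |t. t \<ge> 0}" by (rule CollectI, rule exI[of _ 1]) simp
    ultimately show ?thesis by blast
  qed
  have ul0: "u l \<noteq> 0" using extl unfolding extreme_ray_def by blast
  obtain a where a: "\<forall>i<m. a i \<ge> 0" "u l = (\<Sum>i<m. a i *\<^sub>R x i)"
    using ulK unfolding row_cone_def by blast
  have "u l = (\<Sum>i<m. (a i * b i) *\<^sub>R u k)" unfolding a(2) using b by (intro sum.cong) auto
  also have "\<dots> = (\<Sum>i<m. a i * b i) *\<^sub>R u k" by (simp add: scaleR_sum_left)
  finally have ul: "u l = (\<Sum>i<m. a i * b i) *\<^sub>R u k" .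
  have tge: "(\<Sum>i<m. a i * b i) \<ge> 0" using a(1) b by (intro sum_nonneg) simp
  have "(\<Sum>i<m. a i * b i) \<noteq> 0" using ul ul0 by auto
  with tge have "(\<Sum>i<m. a i * b i) > 0" by simp
  then have "same_ray (u k) (u l)" unfolding same_ray_def using ul by blast
  then show False using gens_distinct k l by blast
qed

end
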